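(* Let $N_{\mathrm{rx}}, N_{\mathrm{UE}} \ge 1$ and $1 \le r \le N_{\mathrm{rx}}$ be integers. For $j = 1,\dots,N_{\mathrm{UE}}$ let $\mathbf{Q}_j \in \mathbb{C}^{N_{\mathrm{rx}}\times N_{\mathrm{rx}}}$ be Hermitian positive semidefinite matrices and $\alpha_j > 0$ real numbers. Define $$\mathbf{Q} := \mathbf{I} + \sum_{j=1}^{N_{\mathrm{UE}}} \alpha_j \mathbf{Q}_j, \qquad \mathbf{R}_i := \mathbf{Q} - \alpha_i \mathbf{Q}_i = \mathbf{I} + \sum_{j\neq i}\alpha_j \mathbf{Q}_j$$ for a fixed index $i$. For an $r \times N_{\mathrm{rx}}$ complex matrix $\mathbf{G}$ of full row rank $r$, define $\tilde{\mathbf{R}}_i(\mathbf{G}) := \mathbf{G}\mathbf{R}_i\mathbf{G}^{\mathsf H}$ and $$\overline{C}_i(\mathbf{G}) := \log_2 \det\!\Big(\mathbf{I} + \mathbf{G}\mathbf{Q}_i\mathbf{G}^{\mathsf H}\,\tilde{\mathbf{R}}_i(\mathbf{G})^{-1}\Big).$$ Then a maximizer of $\overline{C}_i(\mathbf{G})$ over all such $\mathbf{G}$ is $$\mathbf{G}_i = \big[\mathbf{Q}_i^{1/2}\mathbf{Q}^{-1/2}\big]_r\,\mathbf{Q}^{-1/2},$$ where for a matrix $\mathbf{A}$, $[\mathbf{A}]_r$ denotes the $r\times N_{\mathrm{rx}}$ matrix whose rows are the (conjugate-transposed) right singular vectors of $\mathbf{A}$ corresponding to its $r$ largest singular values.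
   Context: $\mathbf{Q}_i^{1/2}$ denotes the Hermitian positive semidefinite square root of $\mathbf{Q}_i$, and $\mathbf{Q}^{-1/2}$ the inverse of the Hermitian positive definite square root of $\mathbf{Q}$ (note $\mathbf{Q} \succeq \mathbf{I}$). If $\mathbf{A} = \mathbf{U}\boldsymbol{\Sigma}\mathbf{V}^{\mathsf H}$ is a singular value decomposition with singular values in nonincreasing order, $[\mathbf{A}]_r$ is the matrix formed by the first $r$ rows of $\mathbf{V}^{\mathsf H}$. Superscript $\mathsf H$ denotes conjugate transpose. (Interpretation: $\mathbf{Q}_j$ is the spatial covariance of the uplink channel of user $j$, $\alpha_j$ its transmit SNR, $\mathbf{G}$ a rank-$r$ receive projection for user $i$, and $\overline{C}_i$ a Jensen upper bound on the ergodic capacity of the projected system.) *)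

theory Defs
  imports "Jordan_Normal_Form.Schur_Decomposition" "Jordan_Normal_Form.DL_Rank"
begin

definition hermitian_mat :: "nat \<Rightarrow> complex mat \<Rightarrow> bool" where
  "hermitian_mat n A \<longleftrightarrow> A \<in> carrier_mat n n \<and> mat_adjoint A = A"

definition psd_mat :: "nat \<Rightarrow> complex mat \<Rightarrow> bool" where
  "psd_mat n A \<longleftrightarrow> hermitian_mat n A \<and>
     (\<forall>v \<in> carrier_vec n. 0 \<le> Re (conjugate v \<bullet> (A *\<^sub>v v)))"

definition is_psd_sqrt :: "nat \<Rightarrow> complex mat \<Rightarrow> complex mat \<Rightarrow> bool" where
  "is_psd_sqrt n S A \<longleftrightarrow> psd_mat n S \<and> S * S = A"

definition mat_inv :: "complex mat \<Rightarrow> complex mat" where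
  "mat_inv A = (SOME B. B \<in> carrier_mat (dim_row A) (dim_row A) \<and>
                        A * B = 1\<^sub>m (dim_row A) \<and> B * A = 1\<^sub>m (dim_row A))"

definition unitary_mat :: "nat \<Rightarrow> complex mat \<Rightarrow> bool" where
  "unitary_mat n U \<longleftrightarrow> U \<in> carrier_mat n n \<and> mat_adjoint U * U = 1\<^sub>m n"

definition is_svd :: "nat \<Rightarrow> complex mat \<Rightarrow> complex mat \<Rightarrow> complex mat \<Rightarrow> complex mat \<Rightarrow> bool" where
  "is_svd n A U S V \<longleftrightarrow> A \<in> carrier_mat n n \<and> unitary_mat n U \<and> unitary_mat n V \<and>
     S \<in> carrier_mat n n \<and> diagonal_mat S \<and>
     (\<forall>k<n. S $$ (k,k) \<in> \<real> \<and> 0 \<le> Re (S $$ (k,k))) \<and>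
     (\<forall>k l. k \<le> l \<longrightarrow> l < n \<longrightarrow> Re (S $$ (l,l)) \<le> Re (S $$ (k,k))) \<and>
     A = U * S * mat_adjoint V"

(* [A]_r for the SVD A = U S V^H: the first r rows of V^H *)
definition first_rows :: "nat \<Rightarrow> complex mat \<Rightarrow> complex mat" where
  "first_rows r M = mat r (dim_col M) (\<lambda>(k,l). M $$ (k,l))"

(* Jensen upper bound  log2 det (I + G Qi G^H (G Ri G^H)^{-1});
   the determinant is real positive, we take its real part *)
definition cap_bound :: "nat \<Rightarrow> complex mat \<Rightarrow> complex mat \<Rightarrow> complex mat \<Rightarrow> real" where
  "cap_bound r Qi Ri G =
     log 2 (Re (det (1\<^sub>m r + G * Qi * mat_adjoint G * mat_inv (G * Ri * mat_adjoint G))))"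

end

theory Submission
  imports Defs
begin

lemma adj_carrier[simp]: "mat_adjoint A \<in> carrier_mat (dim_col A) (dim_row A)"
  unfolding mat_adjoint_def by (auto simp: mat_of_rows_def)
lemma adj_dims[simp]: "dim_row (mat_adjoint A) = dim_col A" "dim_col (mat_adjoint A) = dim_row A"
  unfolding mat_adjoint_def by (auto simp: mat_of_rows_def)
lemma adj_index[simp]: "i < dim_col A \<Longrightarrow> j < dim_row A \<Longrightarrow> mat_adjoint A $$ (i,j) = cnj (A $$ (j,i))"
  unfolding mat_adjoint_def by (auto simp: mat_of_rows_def)
lemma adj_carrierI: "A \<in> carrier_mat m n \<Longrightarrow> mat_adjoint A \<in> carrier_mat n m"
  by auto

lemma adj_mult: fixes A B :: "complex mat" assumes "A \<in> carrier_mat m n" "B \<in> carrier_mat n k"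
  shows "mat_adjoint (A * B) = mat_adjoint B * mat_adjoint A"
  using assms by (intro eq_matI) (auto simp: scalar_prod_def row_def col_def mult.commute intro!: sum.cong)

lemma adj_adj[simp]: "mat_adjoint (mat_adjoint (A::complex mat)) = A"
  by (intro eq_matI) auto

lemma adj_one[simp]: "mat_adjoint (1\<^sub>m n :: complex mat) = 1\<^sub>m n"
  by (intro eq_matI) auto

lemma adj_add: fixes A B :: "complex mat" assumes "A \<in> carrier_mat m n" "B \<in> carrier_mat m n"
  shows "mat_adjoint (A + B) = mat_adjoint A + mat_adjoint B"
  using assms by (intro eq_matI) auto

lemma adj_minus: fixes A B :: "complex mat" assumes "A \<in> carrier_mat m n" "B \<in> carrier_mat m n"
  shows "mat_adjoint (A - B) = mat_adjoint A - mat_adjoint B"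
  using assms by (intro eq_matI) auto

lemma adj_smult_real: "mat_adjoint (complex_of_real c \<cdot>\<^sub>m A) = complex_of_real c \<cdot>\<^sub>m mat_adjoint A"
  by (intro eq_matI) auto

lemma det_adj: assumes "A \<in> carrier_mat n n" shows "det (mat_adjoint A) = cnj (det A)"
proof -
  have "mat_adjoint A = transpose_mat (map_mat cnj A)"
    using assms by (intro eq_matI) auto
  hence "det (mat_adjoint A) = det (map_mat cnj A)" using assms
    by (simp add: det_transpose)
  also have "\<dots> = cnj (det A)"
  proof -
    have C: "map_mat cnj A \<in> carrier_mat n n" using assms by simp
    show ?thesis unfolding det_def'[OF C] det_def'[OF assms]
      by (auto simp: sum_conjugate intro!: sum.cong prod.cong)
         (use assms permutes_in_image in fastforce)
  qed
  finally show ?thesis .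
qed


definition diagm :: "nat \<Rightarrow> (nat \<Rightarrow> complex) \<Rightarrow> complex mat" where
  "diagm n d = mat n n (\<lambda>(k,l). if k = l then d k else 0)"

lemma diagm_carrier[simp]: "diagm n d \<in> carrier_mat n n" unfolding diagm_def by simp

lemma cb_expand:
  fixes Y :: "complex mat"
  assumes Y: "Y \<in> carrier_mat r n"
  defines "F \<equiv> {f. (\<forall>i\<in>{0..<r}. f i \<in> {0..<n}) \<and> (\<forall>i. i \<notin> {0..<r} \<longrightarrow> f i = i)}"
  defines "w \<equiv> (\<lambda>f. (\<Prod>i=0..<r. Y $$ (i, f i)) * det (mat\<^sub>r r r (\<lambda>i. row (mat_adjoint Y) (f i))))"
  shows "det (Y * diagm n d * mat_adjoint Y) = (\<Sum>f\<in>F. w f * (\<Prod>k\<in>f ` {0..<r}. d k))"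
    and "f \<in> F \<Longrightarrow> \<not> inj_on f {0..<r} \<Longrightarrow> w f = 0"
proof -
  let ?A = "Y * diagm n d" and ?B = "mat_adjoint Y"
  have A: "?A \<in> carrier_mat r n" using Y by simp
  have B: "?B \<in> carrier_mat n r" by (rule adj_carrierI[OF Y])
  have Aidx: "?A $$ (i,k) = Y $$ (i,k) * d k" if "i < r" "k < n" for i k
  proof -
    have "?A $$ (i,k) = (\<Sum>j=0..<n. Y $$ (i,j) * (if j = k then d j else 0))"
      using that Y by (simp add: diagm_def scalar_prod_def)
    also have "\<dots> = (\<Sum>j=0..<n. if j = k then Y $$ (i,j) * d j else 0)"
      by (intro sum.cong) auto
    also have "\<dots> = Y $$ (i,k) * d k" using that by simp
    finally show ?thesis .
  qed
  have fU: "finite {0..<n}" by simp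
  have rowB: "\<And>k. row ?B k \<in> carrier_vec r" using B unfolding row_def by auto
  have "det (?A * ?B) = (\<Sum>f\<in>F. det (mat\<^sub>r r r (\<lambda>i. ?A $$ (i, f i) \<cdot>\<^sub>v row ?B (f i))))"
    unfolding mat_mul_finsum_alt[OF A B] F_def
    by (rule det_linear_rows_sum[OF fU], insert A B, auto)
  also have "\<dots> = (\<Sum>f\<in>F. (\<Prod>i=0..<r. ?A $$ (i, f i)) * det (mat\<^sub>r r r (\<lambda>i. row ?B (f i))))"
    by (intro sum.cong refl det_rows_mul) (use rowB in auto)
  also have "\<dots> = (\<Sum>f\<in>F. w f * (\<Prod>k\<in>f ` {0..<r}. d k))"
  proof (intro sum.cong refl)
    fix f assume f: "f \<in> F"
    have fi: "i < r \<Longrightarrow> f i < n" for i using f unfolding F_def by auto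
    have pA: "(\<Prod>i=0..<r. ?A $$ (i, f i)) = (\<Prod>i=0..<r. Y $$ (i, f i)) * (\<Prod>i=0..<r. d (f i))"
      by (subst prod.distrib[symmetric]) (auto intro!: prod.cong simp: Aidx fi)
    show "(\<Prod>i=0..<r. ?A $$ (i, f i)) * det (mat\<^sub>r r r (\<lambda>i. row ?B (f i))) = w f * (\<Prod>k\<in>f ` {0..<r}. d k)"
    proof (cases "inj_on f {0..<r}")
      case True
      then have "(\<Prod>k\<in>f ` {0..<r}. d k) = (\<Prod>i=0..<r. d (f i))" by (simp add: prod.reindex)
      then show ?thesis unfolding pA w_def by simp
    next
      case False
      then obtain i j where ij: "i < r" "j < r" "i \<noteq> j" "f i = f j" unfolding inj_on_def by auto
      have "det (mat\<^sub>r r r (\<lambda>i. row ?B (f i))) = 0"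
        by (rule det_identical_rows[OF _ ij(3,1,2)]) (auto simp: ij(4) ij(1,2))
      then show ?thesis unfolding w_def by simp
    qed
  qed
  finally show "det (Y * diagm n d * mat_adjoint Y) = (\<Sum>f\<in>F. w f * (\<Prod>k\<in>f ` {0..<r}. d k))" .
next
  assume f: "f \<in> F" "\<not> inj_on f {0..<r}"
  then obtain i j where ij: "i < r" "j < r" "i \<noteq> j" "f i = f j" unfolding inj_on_def by auto
  have "det (mat\<^sub>r r r (\<lambda>i. row (mat_adjoint Y) (f i))) = 0"
    by (rule det_identical_rows[OF _ ij(3,1,2)]) (auto simp: ij(4) ij(1,2))
  then show "w f = 0" unfolding w_def by simp
qed


lemma cb:
  fixes Y :: "complex mat"
  assumes Y: "Y \<in> carrier_mat r n"
  shows "\<exists>c::nat set \<Rightarrow> complex. (\<forall>S. c S \<noteq> 0 \<longrightarrow> S \<subseteq> {0..<n} \<and> card S = r) \<and>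
     (\<forall>d. det (Y * diagm n d * mat_adjoint Y) = (\<Sum>S\<in>Pow {0..<n}. c S * prod d S))"
proof -
  define F where "F \<equiv> {f. (\<forall>i\<in>{0..<r}. f i \<in> {0..<n}) \<and> (\<forall>i. i \<notin> {0..<r} \<longrightarrow> f i = i)}"
  define w where "w \<equiv> (\<lambda>f. (\<Prod>i=0..<r. Y $$ (i, f i)) * det (mat\<^sub>r r r (\<lambda>i. row (mat_adjoint Y) (f i))))"
  note ex = cb_expand[OF Y, folded F_def w_def]
  have ex2: "\<And>f. f \<in> F \<Longrightarrow> \<not> inj_on f {0..<r} \<Longrightarrow> w f = 0"
    using ex(2) unfolding w_def by simp
  define c where "c S = (\<Sum>f\<in>{f\<in>F. f ` {0..<r} = S}. w f)" for S
  have fF: "finite F" unfolding F_def by (rule finite_bounded_functions) auto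
  have img: "(\<lambda>f. f ` {0..<r}) ` F \<subseteq> Pow {0..<n}" unfolding F_def by auto
  have P1: "\<forall>S. c S \<noteq> 0 \<longrightarrow> S \<subseteq> {0..<n} \<and> card S = r"
  proof (intro allI impI)
    fix S assume "c S \<noteq> 0"
    then obtain f where f: "f \<in> F" "f ` {0..<r} = S" "w f \<noteq> 0"
      unfolding c_def by (metis (mono_tags, lifting) mem_Collect_eq sum.neutral)
    then have "inj_on f {0..<r}" using ex2 by blast
    then have "card S = r" using f(2) by (metis card_atLeastLessThan card_image diff_zero)
    moreover have "S \<subseteq> {0..<n}" using f(1,2) img by blast
    ultimately show "S \<subseteq> {0..<n} \<and> card S = r" by simp
  qed
  have P2: "det (Y * diagm n d * mat_adjoint Y) = (\<Sum>S\<in>Pow {0..<n}. c S * prod d S)" for d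
  proof -
    have "det (Y * diagm n d * mat_adjoint Y) = (\<Sum>f\<in>F. w f * prod d (f ` {0..<r}))" using ex(1) unfolding w_def by simp
    also have "\<dots> = (\<Sum>S\<in>Pow {0..<n}. \<Sum>f\<in>{f\<in>F. f ` {0..<r} = S}. w f * prod d (f ` {0..<r}))"
      by (rule sum.group[symmetric, OF fF _ img]) simp
    also have "\<dots> = (\<Sum>S\<in>Pow {0..<n}. c S * prod d S)"
      unfolding c_def sum_distrib_right by (intro sum.cong refl) simp
    finally show ?thesis .
  qed
  show ?thesis using P1 P2 by blast
qed


lemma diagm_indicator:
  assumes g: "bij_betw g {0..<r} S" and S: "S \<subseteq> {0..<n}"
  defines "E \<equiv> mat n r (\<lambda>(k,j). if k = g j then 1 else 0 :: complex)"
  shows "E * mat_adjoint E = diagm n (\<lambda>k. if k \<in> S then 1 else 0)"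
proof (rule eq_matI)
  fix k l assume kl: "k < dim_row (diagm n (\<lambda>k. if k \<in> S then 1 else 0))"
     "l < dim_col (diagm n (\<lambda>k. if k \<in> S then 1 else 0))"
  hence k: "k < n" and l: "l < n" by (auto simp: diagm_def)
  have "(E * mat_adjoint E) $$ (k,l) = (\<Sum>j=0..<r. (if k = g j \<and> l = g j then 1 else 0))"
    using k l unfolding E_def by (auto simp: scalar_prod_def intro!: sum.cong)
  also have "\<dots> = (\<Sum>s\<in>S. (if k = s \<and> l = s then 1 else 0))"
    using sum.reindex_bij_betw[OF g, of "\<lambda>s. (if k = s \<and> l = s then 1 else 0 :: complex)"] by simp
  also have "\<dots> = diagm n (\<lambda>k. if k \<in> S then 1 else 0) $$ (k,l)"
    using k l finite_subset[OF S] by (auto simp: diagm_def)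
  finally show "(E * mat_adjoint E) $$ (k,l) = diagm n (\<lambda>k. if k \<in> S then 1 else 0) $$ (k,l)" .
qed (auto simp: diagm_def E_def)

lemma cb_nonneg:
  fixes Y :: "complex mat"
  assumes Y: "Y \<in> carrier_mat r n"
    and c1: "\<forall>S. c S \<noteq> 0 \<longrightarrow> S \<subseteq> {0..<n} \<and> card S = r"
    and c2: "\<forall>d. det (Y * diagm n d * mat_adjoint Y) = (\<Sum>S\<in>Pow {0..<n}. c S * prod d S)"
    and S: "S \<subseteq> {0..<n}"
  shows "c S = complex_of_real (Re (c S)) \<and> Re (c S) \<ge> 0"
proof (cases "card S = r")
  case False
  then have "c S = 0" using c1 by blast
  then show ?thesis by simp
next
  case True
  have fS: "finite S" using S finite_subset by blast
  define d where "d = (\<lambda>k. if k \<in> S then 1 else 0 :: complex)"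
  have "(\<Sum>S'\<in>Pow {0..<n}. c S' * prod d S') = c S * prod d S + (\<Sum>S'\<in>Pow {0..<n} - {S}. c S' * prod d S')"
    by (rule sum.remove) (use S in auto)
  also have "(\<Sum>S'\<in>Pow {0..<n} - {S}. c S' * prod d S') = 0"
  proof (rule sum.neutral, intro ballI)
    fix S' assume S': "S' \<in> Pow {0..<n} - {S}"
    show "c S' * prod d S' = 0"
    proof (cases "c S' = 0")
      case False
      then have cS': "card S' = r" using c1 by blast
      have fS': "finite S'" using S' finite_subset by blast
      have "\<not> S' \<subseteq> S"
      proof
        assume "S' \<subseteq> S"
        then have "S' = S" using card_subset_eq[OF fS] cS' True by metis
        then show False using S' by auto
      qed
      then obtain k where "k \<in> S'" "k \<notin> S" by auto
      then have "prod d S' = 0" using fS' unfolding d_def by (metis (mono_tags, lifting) prod_zero_iff)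
      then show ?thesis by simp
    qed simp
  qed
  also have "prod d S = 1" unfolding d_def by simp
  finally have cS: "det (Y * diagm n d * mat_adjoint Y) = c S" using c2 by simp
  obtain g where g: "bij_betw g {0..<r} S" using ex_bij_betw_nat_finite[OF fS] True by metis
  define E where "E \<equiv> mat n r (\<lambda>(k,j). if k = g j then 1 else 0 :: complex)"
  have E: "E \<in> carrier_mat n r" unfolding E_def by simp
  have "diagm n d = E * mat_adjoint E" unfolding d_def E_def by (rule diagm_indicator[OF g S, symmetric])
  have YE: "Y * E \<in> carrier_mat r r" using Y E by simp
  have aE: "mat_adjoint E \<in> carrier_mat r n" using adj_carrierI[OF E] .
  have aY: "mat_adjoint Y \<in> carrier_mat n r" using adj_carrierI[OF Y] .
  have "Y * diagm n d * mat_adjoint Y = Y * E * mat_adjoint E * mat_adjoint Y"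
    unfolding \<open>diagm n d = E * mat_adjoint E\<close> using assoc_mult_mat[OF Y E aE] by simp
  also have "\<dots> = (Y * E) * (mat_adjoint E * mat_adjoint Y)"
    using assoc_mult_mat[OF YE aE aY] .
  also have "mat_adjoint E * mat_adjoint Y = mat_adjoint (Y * E)" using adj_mult[OF Y E] by simp
  also have "det ((Y * E) * mat_adjoint (Y * E)) = det (Y * E) * det (mat_adjoint (Y * E))"
    using det_mult[OF YE adj_carrierI[OF YE]] .
  also have "det (mat_adjoint (Y * E)) = cnj (det (Y * E))" using det_adj[OF YE] .
  finally have "c S = det (Y * E) * cnj (det (Y * E))" using cS by simp
  then show ?thesis by (simp add: complex_mult_cnj)
qed


lemma massoc: "dim_col A = dim_row B \<Longrightarrow> dim_col B = dim_row C \<Longrightarrow> A * B * C = A * (B * (C :: 'a::semiring_0 mat))"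
  by (rule assoc_mult_mat[of A "dim_row A" "dim_col A" B "dim_col B" C "dim_col C"]) auto

lemma mat_inv_props:
  assumes A: "A \<in> carrier_mat n n" and d: "det A \<noteq> 0"
  shows "mat_inv A \<in> carrier_mat n n \<and> A * mat_inv A = 1\<^sub>m n \<and> mat_inv A * A = 1\<^sub>m n"
proof -
  have "A \<in> Units (ring_mat TYPE(complex) n ())" by (rule det_non_zero_imp_unit[OF A d])
  then obtain B where B: "B \<in> carrier_mat n n" "B * A = 1\<^sub>m n" "A * B = 1\<^sub>m n"
    unfolding Units_def by (auto simp: ring_mat_def)
  have dr: "dim_row A = n" using A by simp
  have "\<exists>B. B \<in> carrier_mat (dim_row A) (dim_row A) \<and> A * B = 1\<^sub>m (dim_row A) \<and> B * A = 1\<^sub>m (dim_row A)"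
    using B dr by auto
  from someI_ex[OF this] show ?thesis unfolding mat_inv_def dr by auto
qed

definition qf :: "complex mat \<Rightarrow> complex vec \<Rightarrow> complex" where
  "qf X w = conjugate w \<bullet> (X *\<^sub>v w)"

lemma cnorm_sq: assumes w: "w \<in> carrier_vec n"
  shows "conjugate w \<bullet> w = complex_of_real (\<Sum>i<n. (cmod (w $ i))\<^sup>2)"
proof -
  have e: "z * cnj z = (complex_of_real (cmod z))\<^sup>2" for z by (metis complex_norm_square of_real_power)
  show ?thesis using w by (simp add: scalar_prod_def of_real_sum atLeast0LessThan mult.commute e)
qed

lemma cnorm_pos: assumes w: "w \<in> carrier_vec n" "w \<noteq> 0\<^sub>v n"
  shows "Re (conjugate w \<bullet> w) > 0"
proof -
  obtain i where i: "i < n" "w $ i \<noteq> 0" using w by (metis carrier_vecD eq_vecI index_zero_vec(1) index_zero_vec(2))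
  have "(\<Sum>i<n. (cmod (w $ i))\<^sup>2) > 0"
    by (rule sum_pos2[of _ i]) (use i in auto)
  then show ?thesis unfolding cnorm_sq[OF w(1)] by simp
qed

lemma qf_add: assumes "A \<in> carrier_mat n n" "B \<in> carrier_mat n n" "w \<in> carrier_vec n"
  shows "qf (A + B) w = qf A w + qf B w"
  unfolding qf_def using assms by (simp add: add_mult_distrib_mat_vec scalar_prod_add_distrib[of _ n])

lemma qf_one: assumes "w \<in> carrier_vec n" shows "qf (1\<^sub>m n) w = conjugate w \<bullet> w"
  unfolding qf_def using assms by simp

lemma qf_sum:
  fixes Qs :: "nat \<Rightarrow> complex mat" and \<alpha> :: "nat \<Rightarrow> real"
  assumes w: "w \<in> carrier_vec n" and fJ: "finite J"
  shows "qf (mat n n (\<lambda>(k,l). \<Sum>j\<in>J. complex_of_real (\<alpha> j) * Qs j $$ (k,l))) w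
    = (\<Sum>j\<in>J. complex_of_real (\<alpha> j) * qf (mat n n (\<lambda>(k,l). Qs j $$ (k,l))) w)"
  using w unfolding qf_def
  by (simp add: scalar_prod_def mult_mat_vec_def sum_distrib_left sum_distrib_right
      sum.swap[of _ J] mult_ac atLeast0LessThan)

lemma qf_row: fixes M :: "complex mat" assumes M: "M \<in> carrier_mat m n" and X: "X \<in> carrier_mat n n" and k: "k < m"
  shows "(M * X * mat_adjoint M) $$ (k,k) = qf X (conjugate (row M k))"
  using M X k unfolding qf_def
  by (simp add: scalar_prod_def mult_mat_vec_def sum_distrib_left sum_distrib_right
      mult_ac atLeast0LessThan row_def col_def) (rule sum.swap)

lemma adjv_index: fixes G :: "complex mat" assumes G: "G \<in> carrier_mat r n" and v: "v \<in> carrier_vec r" and l: "l < n"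
  shows "(mat_adjoint G *\<^sub>v v) $ l = (\<Sum>i<r. cnj (G $$ (i,l)) * v $ i)"
  using G v l by (simp add: mult_mat_vec_def scalar_prod_def atLeast0LessThan row_def mult.commute)

lemma adj_sprod: fixes G :: "complex mat" assumes G: "G \<in> carrier_mat r n" and v: "v \<in> carrier_vec r" and z: "z \<in> carrier_vec n"
  shows "conjugate v \<bullet> (G *\<^sub>v z) = conjugate (mat_adjoint G *\<^sub>v v) \<bullet> z"
proof -
  have "conjugate (mat_adjoint G *\<^sub>v v) \<bullet> z = (\<Sum>l<n. cnj (\<Sum>i<r. cnj (G $$ (i,l)) * v $ i) * z $ l)"
    using G v z by (simp add: scalar_prod_def atLeast0LessThan adjv_index)
  also have "\<dots> = (\<Sum>l<n. \<Sum>i<r. G $$ (i,l) * cnj (v $ i) * z $ l)"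
    by (simp add: sum_distrib_right)
  also have "\<dots> = (\<Sum>i<r. \<Sum>l<n. G $$ (i,l) * cnj (v $ i) * z $ l)" by (rule sum.swap)
  also have "\<dots> = conjugate v \<bullet> (G *\<^sub>v z)"
    using G v z by (simp add: scalar_prod_def mult_mat_vec_def atLeast0LessThan sum_distrib_left mult_ac)
  finally show ?thesis by simp
qed


lemma prod_top:
  fixes \<rho> :: "nat \<Rightarrow> real"
  assumes pos: "\<And>k. k < n \<Longrightarrow> \<rho> k > 0"
    and mono: "\<And>k l. k \<le> l \<Longrightarrow> l < n \<Longrightarrow> \<rho> l \<le> \<rho> k"
    and r: "1 \<le> r" "r \<le> n" and S: "S \<subseteq> {0..<n}" "card S = r"
  shows "prod \<rho> S \<le> prod \<rho> {0..<r}"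
proof -
  define c where "c = \<rho> (r - 1)"
  define A where "A = S \<inter> {0..<r}"
  define B1 where "B1 = S - {0..<r}"
  define B2 where "B2 = {0..<r} - S"
  have fS: "finite S" using S finite_subset by blast
  have S1: "S = A \<union> B1" "A \<inter> B1 = {}" unfolding A_def B1_def by auto
  have R1: "{0..<r} = A \<union> B2" "A \<inter> B2 = {}" unfolding A_def B2_def by auto
  have pS: "prod \<rho> S = prod \<rho> A * prod \<rho> B1"
    using prod.union_disjoint[of A B1 \<rho>] S1 fS unfolding A_def B1_def by auto
  have pR: "prod \<rho> {0..<r} = prod \<rho> A * prod \<rho> B2"
    using prod.union_disjoint[of A B2 \<rho>] R1 unfolding A_def B2_def by auto
  have cB1: "card B1 = r - card A" unfolding B1_def A_def using S fS
    by (metis Diff_Int2 card_Diff_subset_Int finite_Int inf.idem)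
  have cB2: "card B2 = r - card A" unfolding B2_def A_def
    by (metis Diff_Int2 card_Diff_subset_Int card_atLeastLessThan diff_zero finite_Int finite_atLeastLessThan inf.idem inf_commute)
  have "prod \<rho> B1 \<le> prod (\<lambda>_. c) B1"
  proof (rule prod_mono, intro ballI conjI)
    fix k assume k: "k \<in> B1"
    then have "k < n" "r - 1 \<le> k" using S unfolding B1_def by auto
    then show "0 \<le> \<rho> k" "\<rho> k \<le> c" unfolding c_def using pos mono by (auto simp: less_imp_le)
  qed
  also have "\<dots> = c ^ (r - card A)" using cB1 by simp
  also have "\<dots> = prod (\<lambda>_. c) B2" using cB2 by simp
  also have "\<dots> \<le> prod \<rho> B2"
  proof (rule prod_mono, intro ballI conjI)
    fix k assume k: "k \<in> B2"
    then have "k \<le> r - 1" unfolding B2_def by auto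
    moreover have "r - 1 < n" using r by auto
    ultimately show "0 \<le> c" "c \<le> \<rho> k" unfolding c_def using pos mono by (auto simp: less_imp_le)
  qed
  finally have "prod \<rho> B1 \<le> prod \<rho> B2" .
  moreover have "0 \<le> prod \<rho> A" using pos S unfolding A_def by (intro prod_nonneg) (metis IntD1 atLeastLessThan_iff less_imp_le subsetD)
  ultimately show ?thesis unfolding pS pR by (simp add: mult_left_mono)
qed


context vec_space
begin

lemma rank_full_span:
  assumes G: "G \<in> carrier_mat n nc" and rk: "rank G = n"
  shows "span (set (cols G)) = carrier_vec n"
proof -
  obtain U where U: "maximal U (\<lambda>T. T \<subseteq> set (cols G) \<and> lin_indpt T)"
    using maximal_exists[of "(\<lambda>T. T \<subseteq> set (cols G) \<and> lin_indpt T)" "card (set (cols G))" "{}"]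
    by (meson List.finite_set card_mono empty_iff empty_subsetI finite_lin_indpt2 rev_finite_subset)
  have cU: "card U = n" using rank_card_indpt[OF G U] rk by simp
  have Usub: "U \<subseteq> set (cols G)" and li: "lin_indpt U" using U unfolding maximal_def by auto
  have colsC: "set (cols G) \<subseteq> carrier_vec n" using G cols_dim by blast
  have UC: "U \<subseteq> carrier_vec n" using Usub colsC by blast
  have fU: "finite U" using Usub finite_subset by blast
  have "basis U" by (rule dim_li_is_basis) (use fU UC li cU dim_is_n in auto)
  then have "span U = carrier_vec n" unfolding basis_def by simp
  moreover have "span U \<subseteq> span (set (cols G))" by (rule span_is_monotone[OF Usub])
  moreover have "span (set (cols G)) \<subseteq> carrier_vec n" using span_closed[OF colsC] by blast
  ultimately show ?thesis by blast
qed

lemma mult_in_span: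
  assumes G: "G \<in> carrier_mat n nc" and u: "u \<in> carrier_vec nc"
  shows "G *\<^sub>v u \<in> span (set (cols G))"
proof -
  have colsC: "set (cols G) \<subseteq> carrier_vec n" using G cols_dim by blast
  have "lincomb_list (\<lambda>i. u $ i) (cols G) = mat_of_cols n (cols G) *\<^sub>v vec (length (cols G)) (\<lambda>i. u $ i)"
    by (rule lincomb_list_as_mat_mult) (use colsC in auto)
  also have "mat_of_cols n (cols G) = G" using G mat_of_cols_cols[of G] by simp
  also have "vec (length (cols G)) (\<lambda>i. u $ i) = u" using G u by auto
  finally have "G *\<^sub>v u = lincomb_list (\<lambda>i. u $ i) (cols G)" by simp
  also have "\<dots> \<in> span_list (cols G)" unfolding span_list_def by blast
  also have "span_list (cols G) = span (set (cols G))" by (rule span_list_as_span[OF colsC])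
  finally show ?thesis .
qed

lemma span_full_rank:
  assumes G: "G \<in> carrier_mat n nc" and sp: "carrier_vec n \<subseteq> span (set (cols G))"
  shows "rank G = n"
proof -
  have colsC: "set (cols G) \<subseteq> carrier_vec n" using G cols_dim by blast
  have "span (set (cols G)) = carrier_vec n" using sp span_closed[OF colsC] by blast
  then have "span_vs (set (cols G)) = V" by simp
  then show ?thesis unfolding rank_def using dim_is_n by simp
qed

end

lemma full_rank_adj_inj:
  fixes G :: "complex mat"
  assumes G: "G \<in> carrier_mat r n" and rk: "vec_space.rank r G = r"
    and v: "v \<in> carrier_vec r" and z: "mat_adjoint G *\<^sub>v v = 0\<^sub>v n"
  shows "v = 0\<^sub>v r"
proof -
  interpret VS: vec_space "TYPE(complex)" r .
  have sp: "VS.span (set (cols G)) = carrier_vec r" by (rule VS.rank_full_span[OF G rk])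
  have colsC: "set (cols G) \<subseteq> carrier_vec r" using G cols_dim by blast
  have "conjugate v \<in> VS.orthogonal_complement (set (cols G))"
  proof -
    have "conjugate v \<bullet> y = 0" if y: "y \<in> set (cols G)" for y
    proof -
      obtain j where j: "j < n" "y = col G j" using y G by (auto simp: cols_def)
      have "G *\<^sub>v unit_vec n j = col G j"
        using G j by (intro eq_vecI) (auto simp: scalar_prod_right_unit)
      then have "conjugate v \<bullet> y = conjugate v \<bullet> (G *\<^sub>v unit_vec n j)"
        using j by simp
      also have "\<dots> = conjugate (mat_adjoint G *\<^sub>v v) \<bullet> unit_vec n j"
        by (rule adj_sprod[OF G v]) simp
      also have "\<dots> = 0" using z j by simp
      finally show ?thesis .
    qed
    then show ?thesis unfolding VS.orthogonal_complement_def using v by auto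
  qed
  then have "conjugate v \<in> VS.orthogonal_complement (VS.span (set (cols G)))"
    using VS.in_orthogonal_complement_span[OF colsC] by simp
  then have "conjugate v \<bullet> v = 0" unfolding sp VS.orthogonal_complement_def using v by auto
  then show ?thesis using cnorm_pos[OF v] by (metis zero_complex.simps(1) less_irrefl)
qed


lemma cap_ratio:
  fixes G Qi Ri :: "complex mat"
  assumes G: "G \<in> carrier_mat r n" and Qi: "Qi \<in> carrier_mat n n" and Ri: "Ri \<in> carrier_mat n n"
    and d: "det (G * Ri * mat_adjoint G) \<noteq> 0"
  shows "cap_bound r Qi Ri G = log 2 (Re (det (G * (Ri + Qi) * mat_adjoint G) / det (G * Ri * mat_adjoint G)))"
proof -
  define Rt where "Rt = G * Ri * mat_adjoint G"
  define Pt where "Pt = G * Qi * mat_adjoint G"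
  have aG: "mat_adjoint G \<in> carrier_mat n r" by (rule adj_carrierI[OF G])
  have Rt: "Rt \<in> carrier_mat r r" unfolding Rt_def using G Ri aG by simp
  have Pt: "Pt \<in> carrier_mat r r" unfolding Pt_def using G Qi aG by simp
  note inv = mat_inv_props[OF Rt d[folded Rt_def]]
  define Ri' where "Ri' = mat_inv Rt"
  have Ri': "Ri' \<in> carrier_mat r r" "Rt * Ri' = 1\<^sub>m r" using inv unfolding Ri'_def by auto
  have e1: "1\<^sub>m r + Pt * Ri' = (Rt + Pt) * Ri'"
    using Ri' Rt Pt by (simp add: add_mult_distrib_mat[of _ r r])
  have "det Rt * det Ri' = 1" using det_mult[OF Rt Ri'(1)] Ri'(2) by simp
  then have dRi': "det Ri' = 1 / det Rt" using d[folded Rt_def] by (simp add: field_simps)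
  have e2: "Rt + Pt = G * (Ri + Qi) * mat_adjoint G"
    unfolding Rt_def Pt_def using G Qi Ri aG
    by (simp add: mult_add_distrib_mat[of G r n] add_mult_distrib_mat[of _ r n])
  have "det (1\<^sub>m r + Pt * Ri') = det (Rt + Pt) / det Rt"
  proof -
    have RPt: "Rt + Pt \<in> carrier_mat r r" using Pt by simp
    show ?thesis unfolding e1 det_mult[OF RPt Ri'(1)] dRi' by simp
  qed
  then show ?thesis unfolding cap_bound_def Ri'_def using e2 unfolding Rt_def Pt_def by simp
qed

lemma sandwich:
  fixes Y M X :: "complex mat"
  assumes Y: "Y \<in> carrier_mat r n" and M: "M \<in> carrier_mat n n" and X: "X \<in> carrier_mat n n"
  shows "(Y * M) * X * mat_adjoint (Y * M) = Y * (M * X * mat_adjoint M) * mat_adjoint Y"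
proof -
  have "mat_adjoint (Y * M) = mat_adjoint M * mat_adjoint Y" by (rule adj_mult[OF Y M])
  then show ?thesis using Y M X by (simp add: massoc)
qed

definition Emat :: "nat \<Rightarrow> nat \<Rightarrow> complex mat" where
  "Emat r n = mat r n (\<lambda>(k,l). if k = l then 1 else 0)"

lemma Emat_carrier[simp]: "Emat r n \<in> carrier_mat r n" unfolding Emat_def by simp

lemma first_rows_E: assumes B: "B \<in> carrier_mat n n" and r: "r \<le> n"
  shows "first_rows r B = Emat r n * B"
proof (rule eq_matI)
  fix k l assume kl: "k < dim_row (Emat r n * B)" "l < dim_col (Emat r n * B)"
  then have k: "k < r" and l: "l < n" using B by (auto simp: Emat_def)
  have "(Emat r n * B) $$ (k,l) = (\<Sum>m=0..<n. (if k = m then 1 else 0) * B $$ (m,l))"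
    using k l B by (simp add: Emat_def scalar_prod_def)
  also have "\<dots> = (\<Sum>m=0..<n. if k = m then B $$ (m,l) else 0)" by (intro sum.cong) auto
  also have "\<dots> = B $$ (k,l)" using k r by simp
  finally show "first_rows r B $$ (k,l) = (Emat r n * B) $$ (k,l)"
    using k l B by (simp add: first_rows_def)
qed (use B in \<open>auto simp: first_rows_def Emat_def\<close>)

lemma E_diag: assumes r: "r \<le> n"
  shows "Emat r n * diagm n d * mat_adjoint (Emat r n) = diagm r d"
proof (rule eq_matI)
  fix k l assume kl: "k < dim_row (diagm r d)" "l < dim_col (diagm r d)"
  then have k: "k < r" and l: "l < r" by (auto simp: diagm_def)
  have ED: "Emat r n * diagm n d = mat r n (\<lambda>(k,l). if k = l then d k else 0)"
  proof (rule eq_matI)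
    fix a b assume ab: "a < dim_row (mat r n (\<lambda>(k,l). if k = l then d k else 0))"
        "b < dim_col (mat r n (\<lambda>(k,l). if k = l then d k else 0))"
    then have a: "a < r" and b: "b < n" by auto
    have "(Emat r n * diagm n d) $$ (a,b) = (\<Sum>m=0..<n. (if a = m then 1 else 0) * (if m = b then d m else 0))"
      using a b by (simp add: Emat_def diagm_def scalar_prod_def)
    also have "\<dots> = (\<Sum>m=0..<n. if a = m then (if m = b then d m else 0) else 0)" by (intro sum.cong) auto
    also have "\<dots> = (if a = b then d a else 0)" using a b r by simp
    finally show "(Emat r n * diagm n d) $$ (a,b) = mat r n (\<lambda>(k,l). if k = l then d k else 0) $$ (a,b)"
      using a b by simp
  qed (auto simp: Emat_def diagm_def)
  have "(Emat r n * diagm n d * mat_adjoint (Emat r n)) $$ (k,l)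
      = (\<Sum>m=0..<n. (if k = m then d k else 0) * cnj (if l = m then 1 else 0))"
    unfolding ED using k l r by (simp add: Emat_def scalar_prod_def)
  also have "\<dots> = (\<Sum>m=0..<n. if k = m then (if l = m then d k else 0) else 0)" by (intro sum.cong) auto
  also have "\<dots> = diagm r d $$ (k,l)" using k l r by (simp add: diagm_def)
  finally show "(Emat r n * diagm n d * mat_adjoint (Emat r n)) $$ (k,l) = diagm r d $$ (k,l)" .
qed (auto simp: diagm_def Emat_def)

lemma det_diagm: "det (diagm r d) = prod d {0..<r}"
proof -
  have "upper_triangular (diagm r d)" by (auto simp: diagm_def upper_triangular_def)
  then have "det (diagm r d) = prod_list (diag_mat (diagm r d))"
    by (rule det_upper_triangular[OF _ diagm_carrier])
  also have "diag_mat (diagm r d) = map d [0..<r]" by (auto simp: diag_mat_def diagm_def intro!: nth_equalityI)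
  also have "prod_list (map d [0..<r]) = prod d {0..<r}" by (simp add: prod.list_conv_set_nth) 
  finally show ?thesis .
qed


lemma cancel_l: fixes A B X :: "complex mat"
  assumes "A * B = 1\<^sub>m m" "dim_col A = dim_row B" "dim_col B = dim_row X" "dim_row X = m"
  shows "A * (B * X) = X"
proof -
  have "A * (B * X) = (A * B) * X" using assms(2,3) by (simp add: massoc)
  also have "\<dots> = X" using assms(1,4) by (simp add: left_mult_one_mat')
  finally show ?thesis .
qed

lemma key1:
  fixes Ti Si U S V :: "complex mat"
  assumes c: "Ti \<in> carrier_mat n n" "Si \<in> carrier_mat n n" "U \<in> carrier_mat n n" "S \<in> carrier_mat n n" "V \<in> carrier_mat n n"
    and aTi: "mat_adjoint Ti = Ti" and aSi: "mat_adjoint Si = Si"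
    and UU: "mat_adjoint U * U = 1\<^sub>m n" and VV: "mat_adjoint V * V = 1\<^sub>m n"
    and svd: "Si * Ti = U * S * mat_adjoint V"
  shows "(mat_adjoint V * Ti) * (Si * Si) * mat_adjoint (mat_adjoint V * Ti) = mat_adjoint S * S"
proof -
  have dims: "dim_row Ti = n" "dim_col Ti = n" "dim_row Si = n" "dim_col Si = n" "dim_row U = n" "dim_col U = n"
    "dim_row S = n" "dim_col S = n" "dim_row V = n" "dim_col V = n" using c by auto
  have aM: "mat_adjoint (mat_adjoint V * Ti) = Ti * V"
    using adj_mult[OF adj_carrierI[OF c(5)] c(1)] aTi by simp
  have TS: "Ti * Si = V * mat_adjoint S * mat_adjoint U"
  proof -
    have "Ti * Si = mat_adjoint (Si * Ti)" using adj_mult[OF c(2) c(1)] aTi aSi by simp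
    also have "\<dots> = mat_adjoint (U * (S * mat_adjoint V))" unfolding svd using dims by (simp add: massoc)
    also have "\<dots> = mat_adjoint (S * mat_adjoint V) * mat_adjoint U"
      by (rule adj_mult[OF c(3) mult_carrier_mat[OF c(4) adj_carrierI[OF c(5)]]])
    also have "mat_adjoint (S * mat_adjoint V) = V * mat_adjoint S"
      using adj_mult[OF c(4) adj_carrierI[OF c(5)]] by simp
    finally show ?thesis .
  qed
  have "(mat_adjoint V * Ti) * (Si * Si) * mat_adjoint (mat_adjoint V * Ti)
      = mat_adjoint V * ((Ti * Si) * ((Si * Ti) * V))" unfolding aM using dims by (simp add: massoc)
  also have "\<dots> = mat_adjoint V * (V * (mat_adjoint S * (mat_adjoint U * (U * (S * (mat_adjoint V * V))))))"
    unfolding TS svd using dims by (simp add: massoc)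
  also have "\<dots> = mat_adjoint S * S"
    using dims VV UU by (simp add: cancel_l[OF VV] cancel_l[OF UU] right_mult_one_mat')
  finally show ?thesis .
qed


lemma sandwich_minus:
  fixes M X Z :: "complex mat"
  assumes M: "M \<in> carrier_mat n n" and X: "X \<in> carrier_mat n n" and Z: "Z \<in> carrier_mat n n"
  shows "M * (X - complex_of_real c \<cdot>\<^sub>m Z) * mat_adjoint M = M * X * mat_adjoint M - complex_of_real c \<cdot>\<^sub>m (M * Z * mat_adjoint M)"
proof -
  have aM: "mat_adjoint M \<in> carrier_mat n n" using adj_carrierI[OF M] .
  have "M * (X - complex_of_real c \<cdot>\<^sub>m Z) = M * X - complex_of_real c \<cdot>\<^sub>m (M * Z)"
    using M X Z by (simp add: mult_minus_distrib_mat[of M n n] mult_smult_distrib[of M n n])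
  then show ?thesis using M X Z aM
    by (simp add: minus_mult_distrib_mat[of _ n n] mult_smult_assoc_mat[of _ n n])
qed

lemma sandwich_plus:
  fixes M X Z :: "complex mat"
  assumes M: "M \<in> carrier_mat n n" and X: "X \<in> carrier_mat n n" and Z: "Z \<in> carrier_mat n n"
  shows "M * (X + Z) * mat_adjoint M = M * X * mat_adjoint M + M * Z * mat_adjoint M"
proof -
  have aM: "mat_adjoint M \<in> carrier_mat n n" using adj_carrierI[OF M] .
  have "M * (X + Z) = M * X + M * Z"
    using M X Z by (simp add: mult_add_distrib_mat[of M n n])
  then show ?thesis using M X Z aM
    by (simp add: add_mult_distrib_mat[of _ n n])
qed

lemma diag_SS:
  fixes S :: "complex mat"
  assumes S: "S \<in> carrier_mat n n" and dS: "diagonal_mat S" and re: "\<forall>k<n. S $$ (k,k) \<in> \<real>"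
  shows "mat_adjoint S * S = diagm n (\<lambda>k. complex_of_real ((Re (S $$ (k,k)))\<^sup>2))"
proof (rule eq_matI)
  fix k l assume kl: "k < dim_row (diagm n (\<lambda>k. complex_of_real ((Re (S $$ (k,k)))\<^sup>2)))"
    "l < dim_col (diagm n (\<lambda>k. complex_of_real ((Re (S $$ (k,k)))\<^sup>2)))"
  then have k: "k < n" and l: "l < n" by (auto simp: diagm_def)
  have off: "\<And>a b. a < n \<Longrightarrow> b < n \<Longrightarrow> a \<noteq> b \<Longrightarrow> S $$ (a,b) = 0"
    using dS S unfolding diagonal_mat_def by auto
  have "(mat_adjoint S * S) $$ (k,l) = (\<Sum>m=0..<n. cnj (S $$ (m,k)) * S $$ (m,l))"
    using S k l by (simp add: scalar_prod_def)
  also have "\<dots> = (\<Sum>m=0..<n. if m = k then cnj (S $$ (k,k)) * S $$ (k,l) else 0)"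
    by (intro sum.cong refl) (use off k in auto)
  also have "\<dots> = cnj (S $$ (k,k)) * S $$ (k,l)" using k by simp
  also have "\<dots> = diagm n (\<lambda>k. complex_of_real ((Re (S $$ (k,k)))\<^sup>2)) $$ (k,l)"
  proof (cases "k = l")
    case True
    obtain t where t: "S $$ (k,k) = complex_of_real t" using re k by (auto elim: Reals_cases)
    then show ?thesis using True k by (simp add: diagm_def power2_eq_square)
  next
    case False
    then show ?thesis using off k l by (simp add: diagm_def)
  qed
  finally show "(mat_adjoint S * S) $$ (k,l) = diagm n (\<lambda>k. complex_of_real ((Re (S $$ (k,k)))\<^sup>2)) $$ (k,l)" .
qed (use S in \<open>auto simp: diagm_def\<close>)


theorem lemma1:
  fixes Nrx NUE r i :: nat
    and Qs :: "nat \<Rightarrow> complex mat"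
    and \<alpha> :: "nat \<Rightarrow> real"
    and Q Ri Si T U S V :: "complex mat"
  assumes "Nrx \<ge> 1" and "NUE \<ge> 1"
    and "1 \<le> r" and "r \<le> Nrx"
    and "i < NUE"
    and "\<And>j. j < NUE \<Longrightarrow> psd_mat Nrx (Qs j)"
    and "\<And>j. j < NUE \<Longrightarrow> \<alpha> j > 0"
    and Q_def: "Q = 1\<^sub>m Nrx + mat Nrx Nrx (\<lambda>(k,l). \<Sum>j<NUE. complex_of_real (\<alpha> j) * Qs j $$ (k,l))"
    and Ri_def: "Ri = Q - complex_of_real (\<alpha> i) \<cdot>\<^sub>m Qs i"
    and "is_psd_sqrt Nrx Si (Qs i)"
    and "is_psd_sqrt Nrx T Q"
    and "is_svd Nrx (Si * mat_inv T) U S V"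
  shows "first_rows r (mat_adjoint V) * mat_inv T \<in> carrier_mat r Nrx
       \<and> vec_space.rank r (first_rows r (mat_adjoint V) * mat_inv T) = r
       \<and> (\<forall>G \<in> carrier_mat r Nrx. vec_space.rank r G = r \<longrightarrow>
            cap_bound r (Qs i) Ri G
              \<le> cap_bound r (Qs i) Ri (first_rows r (mat_adjoint V) * mat_inv T))"
proof -
  define a where "a = \<alpha> i"
  define Qi where "Qi = Qs i"
  have Qsc: "\<And>j. j < NUE \<Longrightarrow> Qs j \<in> carrier_mat Nrx Nrx"
    using assms(6) unfolding psd_mat_def hermitian_mat_def by blast
  have Qic: "Qi \<in> carrier_mat Nrx Nrx" using Qsc assms(5) Qi_def by simp
  define P where "P J = mat Nrx Nrx (\<lambda>(k,l). \<Sum>j\<in>J. complex_of_real (\<alpha> j) * Qs j $$ (k,l))" for J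
  have Pc: "P J \<in> carrier_mat Nrx Nrx" for J unfolding P_def by simp
  have Pd[simp]: "dim_row (P J) = Nrx" "dim_col (P J) = Nrx" for J unfolding P_def by simp_all
  have QP: "Q = 1\<^sub>m Nrx + P {..<NUE}" unfolding Q_def P_def ..
  have Qc: "Q \<in> carrier_mat Nrx Nrx" unfolding QP using Pc by simp
  have Ric: "Ri \<in> carrier_mat Nrx Nrx" unfolding Ri_def by (rule minus_carrier_mat[OF smult_carrier_mat[OF Qsc[OF assms(5)]]])
  have RiP: "Ri = 1\<^sub>m Nrx + P ({..<NUE} - {i})"
  proof (rule eq_matI)
    fix k l assume "k < dim_row (1\<^sub>m Nrx + P ({..<NUE} - {i}))" "l < dim_col (1\<^sub>m Nrx + P ({..<NUE} - {i}))"
    hence k: "k < Nrx" "l < Nrx" using Pc by auto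
    have "(\<Sum>j<NUE. complex_of_real (\<alpha> j) * Qs j $$ (k,l)) = complex_of_real (\<alpha> i) * Qs i $$ (k,l)
        + (\<Sum>j\<in>{..<NUE}-{i}. complex_of_real (\<alpha> j) * Qs j $$ (k,l))"
      by (rule sum.remove) (use assms(5) in auto)
    then show "Ri $$ (k,l) = (1\<^sub>m Nrx + P ({..<NUE} - {i})) $$ (k,l)"
      unfolding Ri_def Q_def P_def using k Qsc[OF assms(5)] by simp
  qed (use Pc Ric in auto)
  have Qsj_mat: "mat Nrx Nrx (\<lambda>(k,l). Qs j $$ (k,l)) = Qs j" if "j < NUE" for j
    using Qsc[OF that] by (intro eq_matI) auto
  have qfpos: "Re (qf (1\<^sub>m Nrx + P J) w) \<ge> Re (conjugate w \<bullet> w)"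
    if J: "J \<subseteq> {..<NUE}" and w: "w \<in> carrier_vec Nrx" for J w
  proof -
    have fJ: "finite J" using J finite_subset by blast
    have "qf (P J) w = (\<Sum>j\<in>J. complex_of_real (\<alpha> j) * qf (mat Nrx Nrx (\<lambda>(k,l). Qs j $$ (k,l))) w)"
      unfolding P_def by (rule qf_sum[OF w fJ])
    also have "\<dots> = (\<Sum>j\<in>J. complex_of_real (\<alpha> j) * qf (Qs j) w)"
      by (intro sum.cong refl) (use J Qsj_mat in auto)
    finally have e: "qf (P J) w = (\<Sum>j\<in>J. complex_of_real (\<alpha> j) * qf (Qs j) w)" .
    have "Re (qf (P J) w) = (\<Sum>j\<in>J. \<alpha> j * Re (qf (Qs j) w))" unfolding e by (simp add: Re_sum)
    also have "\<dots> \<ge> 0"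
    proof (rule sum_nonneg)
      fix j assume j: "j \<in> J"
      then have "j < NUE" using J by auto
      then have "0 \<le> Re (qf (Qs j) w)" "0 < \<alpha> j"
        using assms(6,7) w unfolding psd_mat_def qf_def by auto
      then show "0 \<le> \<alpha> j * Re (qf (Qs j) w)" by simp
    qed
    finally have "Re (qf (P J) w) \<ge> 0" .
    then show ?thesis using qf_add[OF one_carrier_mat Pc w] qf_one[OF w] by simp
  qed
  have dQ: "det Q \<noteq> 0"
  proof
    assume "det Q = 0"
    then obtain v where v: "v \<in> carrier_vec Nrx" "v \<noteq> 0\<^sub>v Nrx" "Q *\<^sub>v v = 0\<^sub>v Nrx"
      using det_0_iff_vec_prod_zero_field[OF Qc] by blast
    have "qf Q v = 0" unfolding qf_def using v by simp
    moreover have "Re (qf Q v) \<ge> Re (conjugate v \<bullet> v)" unfolding QP by (rule qfpos) (use v in auto)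
    moreover have "Re (conjugate v \<bullet> v) > 0" by (rule cnorm_pos[OF v(1,2)])
    ultimately show False by simp
  qed
  have Tc: "T \<in> carrier_mat Nrx Nrx" and aT: "mat_adjoint T = T" and TT: "T * T = Q"
    using assms(11) unfolding is_psd_sqrt_def psd_mat_def hermitian_mat_def by auto
  have dT: "det T \<noteq> 0" using dQ det_mult[OF Tc Tc] TT by auto
  define Ti where "Ti = mat_inv T"
  have Tic: "Ti \<in> carrier_mat Nrx Nrx" and TTi: "T * Ti = 1\<^sub>m Nrx" and TiT: "Ti * T = 1\<^sub>m Nrx"
    using mat_inv_props[OF Tc dT] unfolding Ti_def by auto
  have aTi: "mat_adjoint Ti = Ti"
  proof -
    have aTic: "mat_adjoint Ti \<in> carrier_mat Nrx Nrx" using adj_carrierI[OF Tic] .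
    have 1: "mat_adjoint Ti * T = 1\<^sub>m Nrx" using adj_mult[OF Tc Tic] aT TTi by simp
    have "mat_adjoint Ti = mat_adjoint Ti * (T * Ti)" using TTi right_mult_one_mat[OF aTic] by simp
    also have "\<dots> = (mat_adjoint Ti * T) * Ti" using aTic Tc Tic by (simp add: assoc_mult_mat)
    also have "\<dots> = Ti" using 1 Tic by simp
    finally show ?thesis .
  qed
  have Sic: "Si \<in> carrier_mat Nrx Nrx" and aSi: "mat_adjoint Si = Si" and SiSi: "Si * Si = Qi"
    using assms(10) unfolding Qi_def is_psd_sqrt_def psd_mat_def hermitian_mat_def by auto
  have Uc: "U \<in> carrier_mat Nrx Nrx" and Vc: "V \<in> carrier_mat Nrx Nrx" and Sc: "S \<in> carrier_mat Nrx Nrx"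
    and UU: "mat_adjoint U * U = 1\<^sub>m Nrx" and VV: "mat_adjoint V * V = 1\<^sub>m Nrx"
    and dS: "diagonal_mat S" and sre: "\<forall>k<Nrx. S $$ (k,k) \<in> \<real> \<and> 0 \<le> Re (S $$ (k,k))"
    and smono: "\<forall>k l. k \<le> l \<longrightarrow> l < Nrx \<longrightarrow> Re (S $$ (l,l)) \<le> Re (S $$ (k,k))"
    and svd: "Si * Ti = U * S * mat_adjoint V"
    using assms(12) unfolding is_svd_def unitary_mat_def Ti_def by auto
  have aVc: "mat_adjoint V \<in> carrier_mat Nrx Nrx" using adj_carrierI[OF Vc] .
  have VVa: "V * mat_adjoint V = 1\<^sub>m Nrx" by (rule mat_mult_left_right_inverse[OF aVc Vc VV])
  have dims: "dim_row Ti = Nrx" "dim_col Ti = Nrx" "dim_row T = Nrx" "dim_col T = Nrx"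
    "dim_row V = Nrx" "dim_col V = Nrx" "dim_row Q = Nrx" "dim_col Q = Nrx"
    "dim_row Qi = Nrx" "dim_col Qi = Nrx" "dim_row Ri = Nrx" "dim_col Ri = Nrx"
    using Tic Tc Vc Qc Qic Ric by auto
  define M where "M = mat_adjoint V * Ti"
  define N where "N = T * V"
  have Mc: "M \<in> carrier_mat Nrx Nrx" unfolding M_def using aVc Tic by simp
  have Nc: "N \<in> carrier_mat Nrx Nrx" unfolding N_def using Tc Vc by simp
  have aM: "mat_adjoint M = Ti * V" unfolding M_def using adj_mult[OF aVc Tic] aTi by simp
  have MN: "M * N = 1\<^sub>m Nrx" unfolding M_def N_def using dims
    by (simp add: massoc cancel_l[OF TiT] VV)
  have NM: "N * M = 1\<^sub>m Nrx" unfolding M_def N_def using dims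
    by (simp add: massoc cancel_l[OF VVa] TTi)
  define \<sigma> where "\<sigma> k = (Re (S $$ (k,k)))\<^sup>2" for k
  define Dm where "Dm = diagm Nrx (\<lambda>k. complex_of_real (\<sigma> k))"
  have SS: "mat_adjoint S * S = Dm" unfolding Dm_def \<sigma>_def by (rule diag_SS[OF Sc dS]) (use sre in auto)
  have MQi: "M * Qi * mat_adjoint M = Dm"
    using key1[OF Tic Sic Uc Sc Vc aTi aSi UU VV svd] SS SiSi unfolding M_def by simp
  have MQ: "M * Q * mat_adjoint M = 1\<^sub>m Nrx"
    unfolding aM unfolding M_def TT[symmetric] using dims
    by (simp add: massoc cancel_l[OF TTi] cancel_l[OF TiT] VV)
  define y where "y k = 1 - a * \<sigma> k" for k
  define x where "x k = 1 + (1 - a) * \<sigma> k" for k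
  have MRi: "M * Ri * mat_adjoint M = diagm Nrx (\<lambda>k. complex_of_real (y k))"
  proof -
    have "M * Ri * mat_adjoint M = 1\<^sub>m Nrx - complex_of_real a \<cdot>\<^sub>m Dm"
      unfolding Ri_def a_def[symmetric] Qi_def[symmetric]
      using sandwich_minus[OF Mc Qc Qic, of a] MQ MQi by simp
    also have "\<dots> = diagm Nrx (\<lambda>k. complex_of_real (y k))"
      unfolding Dm_def y_def by (rule eq_matI) (auto simp: diagm_def)
    finally show ?thesis .
  qed
  have MRQ: "M * (Ri + Qi) * mat_adjoint M = diagm Nrx (\<lambda>k. complex_of_real (x k))"
  proof -
    have "M * (Ri + Qi) * mat_adjoint M = diagm Nrx (\<lambda>k. complex_of_real (y k)) + Dm"
      using sandwich_plus[OF Mc Ric Qic] MRi MQi by simp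
    also have "\<dots> = diagm Nrx (\<lambda>k. complex_of_real (x k))"
      unfolding Dm_def y_def x_def by (rule eq_matI) (auto simp: diagm_def algebra_simps)
    finally show ?thesis .
  qed
  have ypos: "y k > 0" if k: "k < Nrx" for k
  proof -
    define w where "w = conjugate (row M k)"
    have wc: "w \<in> carrier_vec Nrx" unfolding w_def using Mc by (simp add: row_def)
    have w0: "w \<noteq> 0\<^sub>v Nrx"
    proof
      assume "w = 0\<^sub>v Nrx"
      then have "row M k = 0\<^sub>v Nrx" unfolding w_def
        by (metis conjugate_zero_vec conjugate_id)
      then have "(M * N) $$ (k,k) = 0" using k Mc Nc by simp
      then show False using MN k by simp
    qed
    have "complex_of_real (y k) = (M * Ri * mat_adjoint M) $$ (k,k)" unfolding MRi using k by (simp add: diagm_def)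
    also have "\<dots> = qf Ri w" unfolding w_def by (rule qf_row[OF Mc Ric k])
    finally have "y k = Re (qf Ri w)" by (metis Re_complex_of_real)
    also have "\<dots> \<ge> Re (conjugate w \<bullet> w)" unfolding RiP by (rule qfpos) (use wc in auto)
    finally show ?thesis using cnorm_pos[OF wc w0] by simp
  qed
  have sig_nn: "\<sigma> k \<ge> 0" for k unfolding \<sigma>_def by simp
  have sig_mono: "\<sigma> l \<le> \<sigma> k" if kl: "k \<le> l" "l < Nrx" for k l
  proof -
    have "0 \<le> Re (S $$ (l,l))" using sre kl by auto
    moreover have "Re (S $$ (l,l)) \<le> Re (S $$ (k,k))" using smono kl by auto
    ultimately show ?thesis unfolding \<sigma>_def by (simp add: power_mono)
  qed
  have xy: "x k = y k + \<sigma> k" for k unfolding x_def y_def by (simp add: algebra_simps)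
  define \<rho> where "\<rho> k = x k / y k" for k
  have rho_alt: "\<rho> k = 1 + \<sigma> k / y k" if "k < Nrx" for k
    using ypos[OF that] unfolding \<rho>_def xy by (simp add: field_simps)
  have rho_pos: "\<rho> k > 0" if "k < Nrx" for k
    using ypos[OF that] sig_nn[of k] unfolding \<rho>_def xy by simp
  have rho_mono: "\<rho> l \<le> \<rho> k" if kl: "k \<le> l" "l < Nrx" for k l
  proof -
    have yk: "y k > 0" and yl: "y l > 0" using ypos kl by auto
    have "\<sigma> l * y k - \<sigma> k * y l = \<sigma> l - \<sigma> k" unfolding y_def by (simp add: algebra_simps)
    then have "\<sigma> l * y k \<le> \<sigma> k * y l" using sig_mono[OF kl] by simp
    then have "\<sigma> l / y l \<le> \<sigma> k / y k" using yk yl by (simp add: divide_simps mult.commute)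
    then show ?thesis using rho_alt kl by simp
  qed
  define K where "K = prod \<rho> {0..<r}"
  define E where "E = Emat r Nrx"
  define G0 where "G0 = first_rows r (mat_adjoint V) * mat_inv T"
  have Ec: "E \<in> carrier_mat r Nrx" unfolding E_def by simp
  have G0E: "G0 = E * M"
    unfolding G0_def E_def M_def Ti_def[symmetric] first_rows_E[OF aVc assms(4)]
    using assoc_mult_mat[OF Emat_carrier aVc Tic] by simp
  have G0c: "G0 \<in> carrier_mat r Nrx" unfolding G0E using Ec Mc by simp
  have G0N: "G0 * N = E" unfolding G0E using assoc_mult_mat[OF Ec Mc Nc] MN Ec by simp
  have sw: "G0 * X * mat_adjoint G0 = E * (M * X * mat_adjoint M) * mat_adjoint E"
    if "X \<in> carrier_mat Nrx Nrx" for X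
    unfolding G0E by (rule sandwich[OF Ec Mc that])
  have RQc: "Ri + Qi \<in> carrier_mat Nrx Nrx" using Qic by simp
  have dG0R: "det (G0 * Ri * mat_adjoint G0) = complex_of_real (prod y {0..<r})"
    unfolding sw[OF Ric] MRi E_def E_diag[OF assms(4)] det_diagm by simp
  have dG0RQ: "det (G0 * (Ri + Qi) * mat_adjoint G0) = complex_of_real (prod x {0..<r})"
    unfolding sw[OF RQc] MRQ E_def E_diag[OF assms(4)] det_diagm by simp
  have ypr: "prod y {0..<r} > 0" using ypos assms(4) by (intro prod_pos) auto
  have ynz: "\<forall>a\<in>{0..<r}. y a \<noteq> 0" using ypos assms(4) by (metis atLeastLessThan_iff less_irrefl order_less_le_trans)
  have cap0: "cap_bound r (Qs i) Ri G0 = log 2 K"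
  proof -
    have "cap_bound r (Qs i) Ri G0 = log 2 (Re (det (G0 * (Ri + Qi) * mat_adjoint G0) / det (G0 * Ri * mat_adjoint G0)))"
      unfolding Qi_def by (rule cap_ratio[OF G0c Qic[unfolded Qi_def] Ric]) (use dG0R ynz Qi_def in simp)
    also have "\<dots> = log 2 (prod x {0..<r} / prod y {0..<r})"
      unfolding dG0R dG0RQ by (simp only: of_real_divide[symmetric] Re_complex_of_real)
    also have "prod x {0..<r} / prod y {0..<r} = K" unfolding K_def \<rho>_def by (simp add: prod_dividef)
    finally show ?thesis .
  qed
  interpret VS: vec_space "TYPE(complex)" r .
  have rk0: "vec_space.rank r G0 = r"
  proof -
    have EE: "E * mat_adjoint E = 1\<^sub>m r"
    proof -
      have d1: "diagm Nrx (\<lambda>_. 1) = 1\<^sub>m Nrx" by (rule eq_matI) (auto simp: diagm_def)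
      have d2: "diagm r (\<lambda>_. 1) = 1\<^sub>m r" by (rule eq_matI) (auto simp: diagm_def)
      show ?thesis using E_diag[OF assms(4), of "\<lambda>_. 1"] Ec unfolding d1 d2 E_def by simp
    qed
    have "carrier_vec r \<subseteq> VS.span (set (cols G0))"
    proof
      fix w :: "complex vec" assume w: "w \<in> carrier_vec r"
      have aEc: "mat_adjoint E \<in> carrier_mat Nrx r" by (rule adj_carrierI[OF Ec])
      define u where "u = N *\<^sub>v (mat_adjoint E *\<^sub>v w)"
      have uc: "u \<in> carrier_vec Nrx" unfolding u_def using Nc aEc w by simp
      have "G0 *\<^sub>v u = (G0 * N) *\<^sub>v (mat_adjoint E *\<^sub>v w)"
        unfolding u_def using assoc_mult_mat_vec[OF G0c Nc, of "mat_adjoint E *\<^sub>v w"] aEc w by simp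
      also have "\<dots> = (E * mat_adjoint E) *\<^sub>v w" unfolding G0N using assoc_mult_mat_vec[OF Ec aEc w] by simp
      also have "\<dots> = w" unfolding EE using w by simp
      finally have "G0 *\<^sub>v u = w" .
      then show "w \<in> VS.span (set (cols G0))" using VS.mult_in_span[OF G0c uc] by simp
    qed
    then show ?thesis by (rule VS.span_full_rank[OF G0c])
  qed
  have main: "cap_bound r (Qs i) Ri G \<le> log 2 K"
    if Gc: "G \<in> carrier_mat r Nrx" and rk: "vec_space.rank r G = r" for G
  proof -
    define Y where "Y = G * N"
    have Yc: "Y \<in> carrier_mat r Nrx" unfolding Y_def using Gc Nc by simp
    have GY: "G = Y * M" unfolding Y_def using assoc_mult_mat[OF Gc Nc Mc] NM Gc by simp
    have aGc: "mat_adjoint G \<in> carrier_mat Nrx r" by (rule adj_carrierI[OF Gc])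
    have GRc: "G * Ri * mat_adjoint G \<in> carrier_mat r r" using Gc Ric aGc by simp
    have dGR: "det (G * Ri * mat_adjoint G) \<noteq> 0"
    proof
      assume "det (G * Ri * mat_adjoint G) = 0"
      then obtain v where v: "v \<in> carrier_vec r" "v \<noteq> 0\<^sub>v r" "(G * Ri * mat_adjoint G) *\<^sub>v v = 0\<^sub>v r"
        using det_0_iff_vec_prod_zero_field[OF GRc] by blast
      define w where "w = mat_adjoint G *\<^sub>v v"
      have wc: "w \<in> carrier_vec Nrx" unfolding w_def using aGc v by simp
      have "(G * Ri * mat_adjoint G) *\<^sub>v v = G *\<^sub>v (Ri *\<^sub>v w)"
        unfolding w_def using assoc_mult_mat_vec[OF mult_carrier_mat[OF Gc Ric] aGc v(1)]
          assoc_mult_mat_vec[OF Gc Ric, of "mat_adjoint G *\<^sub>v v"] aGc v(1) by simp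
      then have "conjugate v \<bullet> (G *\<^sub>v (Ri *\<^sub>v w)) = conjugate v \<bullet> 0\<^sub>v r" using v(3) by simp
      also have "\<dots> = 0" using v(1) by (simp add: scalar_prod_right_zero)
      finally have "conjugate v \<bullet> (G *\<^sub>v (Ri *\<^sub>v w)) = 0" .
      moreover have "conjugate v \<bullet> (G *\<^sub>v (Ri *\<^sub>v w)) = conjugate w \<bullet> (Ri *\<^sub>v w)"
        unfolding w_def by (rule adj_sprod[OF Gc v(1)]) (use Ric aGc v(1) in simp)
      ultimately have q0: "qf Ri w = 0" unfolding qf_def by simp
      have "Re (qf Ri w) \<ge> Re (conjugate w \<bullet> w)" unfolding RiP by (rule qfpos) (use wc in auto)
      then have "w = 0\<^sub>v Nrx" using cnorm_pos[OF wc] q0 by fastforce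
      then have "v = 0\<^sub>v r" using full_rank_adj_inj[OF Gc rk v(1)] unfolding w_def by simp
      then show False using v(2) by simp
    qed
    obtain c where c1: "\<forall>S. c S \<noteq> 0 \<longrightarrow> S \<subseteq> {0..<Nrx} \<and> card S = r"
      and c2: "\<forall>d. det (Y * diagm Nrx d * mat_adjoint Y) = (\<Sum>S\<in>Pow {0..<Nrx}. c S * prod d S)"
      using cb[OF Yc] by blast
    define C where "C S = Re (c S)" for S
    have cC: "c S = complex_of_real (C S) \<and> C S \<ge> 0" if "S \<subseteq> {0..<Nrx}" for S
      using cb_nonneg[OF Yc c1 c2 that] unfolding C_def by simp
    have detform: "det (Y * diagm Nrx (\<lambda>k. complex_of_real (f k)) * mat_adjoint Y)
        = complex_of_real (\<Sum>S\<in>Pow {0..<Nrx}. C S * prod f S)" for f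
    proof -
      have "det (Y * diagm Nrx (\<lambda>k. complex_of_real (f k)) * mat_adjoint Y)
          = (\<Sum>S\<in>Pow {0..<Nrx}. c S * prod (\<lambda>k. complex_of_real (f k)) S)" using c2 by simp
      also have "\<dots> = (\<Sum>S\<in>Pow {0..<Nrx}. complex_of_real (C S * prod f S))"
        by (intro sum.cong refl) (use cC in auto)
      finally show ?thesis by simp
    qed
    define Dn where "Dn = (\<Sum>S\<in>Pow {0..<Nrx}. C S * prod y S)"
    define Nm where "Nm = (\<Sum>S\<in>Pow {0..<Nrx}. C S * prod x S)"
    have dR: "det (G * Ri * mat_adjoint G) = complex_of_real Dn"
      unfolding Dn_def GY sandwich[OF Yc Mc Ric] MRi detform ..
    have dRQ: "det (G * (Ri + Qi) * mat_adjoint G) = complex_of_real Nm"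
      unfolding Nm_def GY sandwich[OF Yc Mc RQc] MRQ detform ..
    have capG: "cap_bound r (Qs i) Ri G = log 2 (Nm / Dn)"
    proof -
      have "cap_bound r (Qs i) Ri G = log 2 (Re (det (G * (Ri + Qi) * mat_adjoint G) / det (G * Ri * mat_adjoint G)))"
        unfolding Qi_def by (rule cap_ratio[OF Gc Qic[unfolded Qi_def] Ric dGR])
      also have "\<dots> = log 2 (Nm / Dn)" unfolding dR dRQ by (simp only: of_real_divide[symmetric] Re_complex_of_real)
      finally show ?thesis .
    qed
    have prod_y_nn: "prod y S \<ge> 0" if "S \<subseteq> {0..<Nrx}" for S
      using ypos that by (intro prod_nonneg) (metis atLeastLessThan_iff less_imp_le subsetD)
    have Dn_nn: "Dn \<ge> 0" unfolding Dn_def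
      by (intro sum_nonneg) (use cC prod_y_nn in auto)
    have Dn_pos: "Dn > 0" using Dn_nn dGR dR by (cases "Dn = 0") auto
    have DnNm: "Dn \<le> Nm" unfolding Dn_def Nm_def
    proof (intro sum_mono)
      fix S assume "S \<in> Pow {0..<Nrx}"
      then have S: "S \<subseteq> {0..<Nrx}" by auto
      have "prod y S \<le> prod x S"
      proof (intro prod_mono conjI)
        fix k assume "k \<in> S"
        then have "k < Nrx" using S by auto
        then show "0 \<le> y k" "y k \<le> x k" using ypos[of k] sig_nn[of k] xy[of k] by auto
      qed
      then show "C S * prod y S \<le> C S * prod x S" using cC[OF S] by (simp add: mult_left_mono)
    qed
    have NmK: "Nm \<le> K * Dn" unfolding Dn_def Nm_def sum_distrib_left
    proof (intro sum_mono)
      fix S assume "S \<in> Pow {0..<Nrx}"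
      then have S: "S \<subseteq> {0..<Nrx}" by auto
      show "C S * prod x S \<le> K * (C S * prod y S)"
      proof (cases "c S = 0")
        case True
        then show ?thesis unfolding C_def by simp
      next
        case False
        then have cS: "card S = r" using c1 by blast
        have "prod x S = prod \<rho> S * prod y S"
          unfolding prod.distrib[symmetric] \<rho>_def
          by (intro prod.cong refl) (use S ypos in \<open>auto simp: less_imp_neq[symmetric]\<close>)
        also have "\<dots> \<le> K * prod y S" unfolding K_def
          by (intro mult_right_mono prod_top[of Nrx \<rho> r S] prod_y_nn)
             (use rho_pos rho_mono assms(3,4) S cS in auto)
        finally have "prod x S \<le> K * prod y S" .
        then have "C S * prod x S \<le> C S * (K * prod y S)" using cC[OF S] by (simp add: mult_left_mono)
        then show ?thesis by (simp add: algebra_simps)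
      qed
    qed
    have q1: "Nm / Dn \<le> K" using NmK Dn_pos by (simp add: divide_le_eq)
    have q2: "Nm / Dn > 0" using DnNm Dn_pos by simp
    show ?thesis unfolding capG using q1 q2 by simp
  qed
  show ?thesis using G0c rk0 main cap0 unfolding G0_def by auto
qed

end
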